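(* For every $m\in\mathbb N$ and every choice of $A_\ell$, $J_\ell$, $\ell=1,\ldots,m$, as in the context, and every $n\in\mathbb N$, \[\left|\mathbb P\left(\bigcap_{\ell=1}^m\mathscr W_{J_{n,\ell}}\left(A^{(q_n)}_{n,\ell}\right)\right)-\mathbb P\left(\bigcap_{\ell=1}^m\mathscr W_{J_{n,\ell}}\left(A_{n,\ell}\right)\right)\right|\leq q_n\sum_{\ell=1}^m\mathbb P(A_{n,\ell}).\]
   Context: Let $\mathbf X_0,\mathbf X_1,\ldots$ be a stationary sequence of random vectors in $\mathcal V=\mathbb R^d$, identified with the coordinate process on $(\mathcal V^{\mathbb N_0},\mathcal B^{\mathbb N_0},\mathbb P)$, with $\sigma$ the (measure-preserving) left shift $\sigma((x_i)_i)=(x_{i+1})_i$. Let $u_n:(0,\infty)\to(0,\infty)$ be normalising threshold functions (nonincreasing, left continuous, with $n\mathbb P(\|\mathbf X_0\|>u_n(\tau))\to\tau$ for every $\tau>0$), and set $u_n^{-1}(z)=\sup\{\tau>0: z\le u_n(\tau)\}$. Let $(k_n)$, $(t_n)$, $(q_n)$ be sequences of positive integers with $k_n,t_n\to\infty$, $k_nt_n=o(n)$, $r_n:=\lfloor n/k_n\rfloor\to\infty$ and $q_n=o(r_n)$. For an event $A$ and an interval $J\subset[0,\infty)$ let $\mathscr W_J(A)=\bigcap_{i\in J\cap\mathbb N_0}\sigma^{-i}(A^c)$ (no occurrence of $A$ at times in $J$), and for $j\in\mathbb N$ let $A^{(j)}=A\cap\sigma^{-1}(A^c)\cap\cdots\cap\sigma^{-j}(A^c)$.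 Let $\mathscr F$ be the field of cylinder sets $\{(x_j)_j: x_j\in H_j,\ j=0,\ldots,m\}$ with $H_j$ Borel in $\mathcal V$, $m\in\mathbb N$. For $\ell=1,\ldots,m$ take $A_\ell\in\mathscr F$ and $J_\ell=[a_\ell,b_\ell)$ with $0\le a_1<b_1\le a_2<\cdots\le a_m<b_m\le1$, and define $J_{n,\ell}=\big[(\lceil k_na_\ell\rceil-1)r_n,(\lfloor k_nb_\ell\rfloor+1)r_n\big)$ and $A_{n,\ell}=\left\{\left(u_n^{-1}(\|\mathbf X_j\|)\frac{\mathbf X_j}{\|\mathbf X_j\|}\right)_j\in A_\ell\right\}$, with $A^{(q_n)}_{n,\ell}=(A_{n,\ell})^{(q_n)}$. *)

theory Defs
  imports "HOL-Probability.Probability"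
begin

definition shiftn :: "nat \<Rightarrow> (nat \<Rightarrow> 'a) \<Rightarrow> nat \<Rightarrow> 'a" where
  "shiftn i x = (\<lambda>j. x (j + i))"

definition no_occ :: "nat set \<Rightarrow> (nat \<Rightarrow> 'a) set \<Rightarrow> (nat \<Rightarrow> 'a) set" where
  "no_occ J A = (\<Inter>i\<in>J. {x. shiftn i x \<in> - A})"

definition run_end :: "nat \<Rightarrow> (nat \<Rightarrow> 'a) set \<Rightarrow> (nat \<Rightarrow> 'a) set" where
  "run_end j A = A \<inter> (\<Inter>i\<in>{1..j}. {x. shiftn i x \<in> - A})"

definition rect_cyl :: "(nat \<Rightarrow> 'a::topological_space) set set" where
  "rect_cyl = {{x. \<forall>j\<le>m. x j \<in> H j} | m H. \<forall>j. H j \<in> sets borel}"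

definition cyl_field :: "(nat \<Rightarrow> 'a::topological_space) set set" where
  "cyl_field = \<Inter>{M. algebra UNIV M \<and> rect_cyl \<subseteq> M}"

definition gen_inv :: "(real \<Rightarrow> real) \<Rightarrow> real \<Rightarrow> real" where
  "gen_inv u z = Sup {\<tau>. \<tau> > 0 \<and> z \<le> u \<tau>}"

definition transf_event :: "(real \<Rightarrow> real) \<Rightarrow> (nat \<Rightarrow> 'a::real_normed_vector) set \<Rightarrow> (nat \<Rightarrow> 'a) set" where
  "transf_event u A = {x. (\<lambda>j. gen_inv u (norm (x j)) *\<^sub>R (x j /\<^sub>R norm (x j))) \<in> A}"

definition block_times :: "nat \<Rightarrow> nat \<Rightarrow> real \<Rightarrow> real \<Rightarrow> nat set" where
  "block_times k r a b = {i. (\<lceil>real k * a\<rceil> - 1) * int r \<le> int i \<and> int i < (\<lfloor>real k * b\<rfloor> + 1) * int r}"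

end

theory Submission
  imports Defs
begin

lemma gen_inv_meas:
  fixes f :: "real \<Rightarrow> real"
  assumes mono: "\<And>\<tau> \<tau>'. 0<\<tau> \<Longrightarrow> \<tau> \<le> \<tau>' \<Longrightarrow> f \<tau>' \<le> f \<tau>"
  shows "gen_inv f \<in> borel_measurable borel"
proof -
  define D where "D = {z. \<forall>\<tau>>0. z \<le> f \<tau>}"
  define E where "E = {z. \<forall>\<tau>>0. \<not> z \<le> f \<tau>}"
  define Mid where "Mid = - (D \<union> E)"
  have "D = (\<Inter>\<tau>\<in>{0<..}. {..f \<tau>})" unfolding D_def by auto
  then have "closed D" by (simp add: closed_INT)
  then have Db: "D \<in> sets borel" by simp
  have "- E = (\<Union>k::nat. {..f (1 / Suc k)})"
  proof (intro equalityI subsetI)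
    fix z assume "z \<in> - E"
    then obtain \<tau> where t: "\<tau> > 0" "z \<le> f \<tau>" unfolding E_def by auto
    then obtain k where k: "k > 0" "inverse (real k) < \<tau>" using ex_inverse_of_nat_less by blast
    then obtain k' where k': "k = Suc k'" using not0_implies_Suc by blast
    have "f \<tau> \<le> f (1 / Suc k')" using mono[of "1 / Suc k'" \<tau>] k k' by (simp add: inverse_eq_divide)
    then show "z \<in> (\<Union>k::nat. {..f (1 / Suc k)})" using t by (intro UN_I[of k']) auto
  next
    fix z assume "z \<in> (\<Union>k::nat. {..f (1 / Suc k)})"
    then obtain k :: nat where "z \<le> f (1 / Suc k)" by auto
    moreover have "(1::real) / Suc k > 0" by simp
    ultimately show "z \<in> - E" unfolding E_def by blast
  qed
  moreover have "(\<Union>k::nat. {..f (1 / Suc k)}) \<in> sets borel"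
    by (intro sets.countable_UN) auto
  ultimately have "- E \<in> sets borel" by simp
  then have Eb: "E \<in> sets borel" using sets.compl_sets[of "-E" borel] by simp
  have Mb: "Mid \<in> sets borel" unfolding Mid_def using sets.compl_sets[OF sets.Un[OF Db Eb]] by (simp add: Compl_eq_Diff_UNIV)
  have m1: "mono_on D (\<lambda>z. - gen_inv f z)"
  proof -
    have "\<And>z. z \<in> D \<Longrightarrow> gen_inv f z = Sup {0<..}" unfolding gen_inv_def D_def
      by (rule arg_cong[where f=Sup]) auto
    then show ?thesis by (simp add: mono_on_def)
  qed
  have m2: "mono_on E (\<lambda>z. - gen_inv f z)"
  proof -
    have "\<And>z. z \<in> E \<Longrightarrow> gen_inv f z = Sup {}" unfolding gen_inv_def E_def
      by (rule arg_cong[where f=Sup]) auto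
    then show ?thesis by (simp add: mono_on_def)
  qed
  have m3: "mono_on Mid (\<lambda>z. - gen_inv f z)"
  proof (rule mono_onI)
    fix z z' assume z: "z \<in> Mid" "z' \<in> Mid" "z \<le> z'"
    then obtain \<tau>0 where t0: "\<tau>0 > 0" "f \<tau>0 < z" unfolding Mid_def D_def by force
    have bdd: "bdd_above {\<tau>. \<tau> > 0 \<and> z \<le> f \<tau>}"
    proof (rule bdd_aboveI[of _ \<tau>0])
      fix \<tau> assume "\<tau> \<in> {\<tau>. \<tau> > 0 \<and> z \<le> f \<tau>}"
      then show "\<tau> \<le> \<tau>0" using mono[of \<tau>0 \<tau>] t0 by force
    qed
    have ne: "{\<tau>. \<tau> > 0 \<and> z' \<le> f \<tau>} \<noteq> {}" using z unfolding Mid_def E_def by auto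
    have "gen_inv f z' \<le> gen_inv f z" unfolding gen_inv_def
      by (rule cSup_subset_mono[OF ne bdd]) (use z in auto)
    then show "- gen_inv f z \<le> - gen_inv f z'" by simp
  qed
  have "(\<lambda>z. - gen_inv f z) \<in> borel_measurable borel"
  proof (rule borel_measurable_piecewise_mono[of "{D, E, Mid}"])
    show "countable {D, E, Mid}" by simp
    show "\<And>c. c \<in> {D, E, Mid} \<Longrightarrow> c \<in> sets borel" using Db Eb Mb by blast
    show "\<And>c. c \<in> {D, E, Mid} \<Longrightarrow> mono_on c (\<lambda>z. - gen_inv f z)" using m1 m2 m3 by blast
    show "\<Union> {D, E, Mid} = UNIV" unfolding Mid_def by blast
  qed
  then have "(\<lambda>z. - (- gen_inv f z)) \<in> borel_measurable borel" by simp
  then show ?thesis by simp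
qed

lemma space_M0: "space (PiM UNIV (\<lambda>_. borel :: 'a::topological_space measure)) = UNIV"
  by (simp add: space_PiM PiE_UNIV_domain)

lemma transf_meas:
  assumes g: "g \<in> borel_measurable borel"
  shows "(\<lambda>x j. g (norm (x j)) *\<^sub>R (x j /\<^sub>R norm (x j))) \<in>
    measurable (PiM UNIV (\<lambda>_. borel)) (PiM UNIV (\<lambda>_. borel :: 'a::euclidean_space measure))"
proof -
  have h: "(\<lambda>v::'a. g (norm v) *\<^sub>R (v /\<^sub>R norm v)) \<in> borel_measurable borel"
    using g by measurable
  have "(\<lambda>x. g (norm (x j)) *\<^sub>R (x j /\<^sub>R norm (x j))) \<in> borel_measurable (PiM UNIV (\<lambda>_. borel :: 'a measure))" for j
  proof -
    have c: "(\<lambda>x. x j) \<in> measurable (PiM UNIV (\<lambda>_. borel::'a measure)) borel"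
      by (rule measurable_component_singleton) simp
    show ?thesis using measurable_compose[OF c h] by simp
  qed
  then show ?thesis
    by (intro measurable_PiM_single') (auto simp: space_M0)
qed

lemma cyl_sets: "A \<in> cyl_field \<Longrightarrow> A \<in> sets (PiM UNIV (\<lambda>_. borel :: 'a::topological_space measure))"
proof -
  assume "A \<in> cyl_field"
  moreover have "algebra UNIV (sets (PiM UNIV (\<lambda>_. borel :: 'a measure)))"
    using sets.sigma_algebra_axioms[of "PiM UNIV (\<lambda>_. borel :: 'a measure)"]
    unfolding sigma_algebra_def by (metis space_M0)
  moreover have "rect_cyl \<subseteq> sets (PiM UNIV (\<lambda>_. borel :: 'a measure))"
  proof
    fix S :: "(nat \<Rightarrow> 'a) set" assume "S \<in> rect_cyl"
    then obtain m H where S: "S = {x. \<forall>j\<le>m. x j \<in> H j}" and H: "\<forall>j. H j \<in> sets borel"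
      unfolding rect_cyl_def by auto
    have "S = (\<Inter>j\<in>{..m}. (\<lambda>x. x j) -` H j \<inter> space (PiM UNIV (\<lambda>_. borel :: 'a measure)))"
      unfolding S space_M0 by auto
    also have "\<dots> \<in> sets (PiM UNIV (\<lambda>_. borel :: 'a measure))"
      using H by (intro sets.finite_INT) (auto intro: measurable_sets measurable_component_singleton)
    finally show "S \<in> sets (PiM UNIV (\<lambda>_. borel :: 'a measure))" .
  qed
  ultimately show ?thesis unfolding cyl_field_def by blast
qed


lemma shiftn_shiftn: "shiftn s (shiftn i x) = shiftn (i + s) x"
  unfolding shiftn_def by (simp add: ac_simps)

lemma core_occ:
  assumes x1: "x \<in> no_occ J (run_end q B)" and x2: "x \<notin> no_occ J B"
    and J: "J = {i. L \<le> int i \<and> int i < U}"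
  shows "\<exists>i. U - int q \<le> int i \<and> int i < U \<and> shiftn i x \<in> B"
proof -
  define K where "K = {i\<in>J. shiftn i x \<in> B}"
  have Kne: "K \<noteq> {}" using x2 unfolding K_def no_occ_def by auto
  have "K \<subseteq> {..<nat U}" unfolding K_def J by auto
  then have Kfin: "finite K" by (rule finite_subset) simp
  define i0 where "i0 = Max K"
  have i0K: "i0 \<in> K" unfolding i0_def using Kne Kfin by simp
  have i0max: "\<And>i. i \<in> K \<Longrightarrow> i \<le> i0" unfolding i0_def using Kfin by simp
  show ?thesis
  proof (cases "U - int q \<le> int i0")
    case True then show ?thesis using i0K unfolding K_def J by auto
  next
    case False
    have "shiftn i0 x \<in> run_end q B"
      unfolding run_end_def
    proof (intro IntI InterI)
      show "shiftn i0 x \<in> B" using i0K K_def by auto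
    next
      fix S assume "S \<in> (\<lambda>i. {y. shiftn i y \<in> - B}) ` {1..q}"
      then obtain s where s: "s \<in> {1..q}" "S = {y. shiftn s y \<in> - B}" by auto
      have "i0 + s \<in> J" using i0K s False unfolding K_def J by auto
      moreover have "\<not> i0 + s \<le> i0" using s by auto
      ultimately have "shiftn (i0 + s) x \<notin> B" using i0max unfolding K_def by blast
      then show "shiftn i0 x \<in> S" using s by (simp add: shiftn_shiftn)
    qed
    moreover have "i0 \<in> J" using i0K K_def by auto
    ultimately show ?thesis using x1 unfolding no_occ_def by auto
  qed
qed

lemma card_R: "finite {i::nat. U - int q \<le> int i \<and> int i < U} \<and> card {i::nat. U - int q \<le> int i \<and> int i < U} \<le> q"
proof -
  have sub: "{i::nat. U - int q \<le> int i \<and> int i < U} \<subseteq> (\<lambda>s. nat (U - int q + int s)) ` {..<q}"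
  proof
    fix i assume i: "i \<in> {i::nat. U - int q \<le> int i \<and> int i < U}"
    show "i \<in> (\<lambda>s. nat (U - int q + int s)) ` {..<q}"
      by (rule image_eqI[of _ _ "nat (int i - (U - int q))"]) (use i in auto)
  qed
  have "card ((\<lambda>s. nat (U - int q + int s)) ` {..<q}) \<le> q"
    using card_image_le[of "{..<q}"] by simp
  then show ?thesis using sub by (meson card_mono finite_imageI finite_lessThan finite_subset order_trans)
qed

lemma sets_INT_UNIV:
  assumes "space M = UNIV" "countable I" "\<And>i. i \<in> I \<Longrightarrow> S i \<in> sets M"
  shows "(\<Inter>i\<in>I. S i) \<in> sets M"
proof (cases "I = {}")
  case True then show ?thesis using assms(1) sets.top[of M] by simp
next
  case False then show ?thesis using assms by (intro sets.countable_INT') auto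
qed


theorem proposition3p11:
  fixes P :: "(nat \<Rightarrow> 'a::euclidean_space) measure"
    and u :: "nat \<Rightarrow> real \<Rightarrow> real"
    and k t q :: "nat \<Rightarrow> nat"
    and m n :: nat
    and A :: "nat \<Rightarrow> (nat \<Rightarrow> 'a) set"
    and a b :: "nat \<Rightarrow> real"
  assumes prob: "prob_space P"
    and sets_P: "sets P = sets (PiM UNIV (\<lambda>_. borel))"
    and stationary: "distr P P (shiftn 1) = P"
    and u_pos: "\<And>n \<tau>. \<tau> > 0 \<Longrightarrow> u n \<tau> > 0"
    and u_mono: "\<And>n \<tau> \<tau>'. 0 < \<tau> \<Longrightarrow> \<tau> \<le> \<tau>' \<Longrightarrow> u n \<tau>' \<le> u n \<tau>"
    and u_lcont: "\<And>n \<tau>. \<tau> > 0 \<Longrightarrow> continuous (at_left \<tau>) (u n)"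
    and u_norm: "\<And>\<tau>. \<tau> > 0 \<Longrightarrow>
        (\<lambda>n. real n * measure P {x. norm (x 0) > u n \<tau>}) \<longlonglongrightarrow> \<tau>"
    and k_pos: "\<And>n. k n > 0" and t_pos: "\<And>n. t n > 0" and q_pos: "\<And>n. q n > 0"
    and k_lim: "filterlim k at_top sequentially"
    and t_lim: "filterlim t at_top sequentially"
    and kt_small: "(\<lambda>n. real (k n * t n) / real n) \<longlonglongrightarrow> 0"
    and r_lim: "filterlim (\<lambda>n. n div k n) at_top sequentially"
    and q_small: "(\<lambda>n. real (q n) / real (n div k n)) \<longlonglongrightarrow> 0"
    and m_pos: "m \<ge> 1"
    and A_field: "\<And>l. l \<in> {1..m} \<Longrightarrow> A l \<in> cyl_field"
    and a_first: "0 \<le> a 1"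
    and ab: "\<And>l. l \<in> {1..m} \<Longrightarrow> a l < b l"
    and ba: "\<And>l. l \<in> {1..<m} \<Longrightarrow> b l \<le> a (Suc l)"
    and b_last: "b m \<le> 1"
    and n_pos: "n \<ge> 1"
  shows "\<bar>measure P (\<Inter>l\<in>{1..m}. no_occ (block_times (k n) (n div k n) (a l) (b l))
                                  (run_end (q n) (transf_event (u n) (A l))))
         - measure P (\<Inter>l\<in>{1..m}. no_occ (block_times (k n) (n div k n) (a l) (b l))
                                  (transf_event (u n) (A l)))\<bar>
         \<le> real (q n) * (\<Sum>l=1..m. measure P (transf_event (u n) (A l)))"
  proof -
  interpret P: prob_space P by (rule prob)
  let ?M0 = "PiM UNIV (\<lambda>_. borel) :: (nat \<Rightarrow> 'a) measure"
  have spP: "space P = UNIV" using sets_eq_imp_space_eq[OF sets_P] space_M0 by metis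
  have shm: "shiftn i \<in> measurable P P" for i
  proof -
    have "shiftn i \<in> measurable ?M0 ?M0"
      unfolding shiftn_def
    proof (rule measurable_PiM_single')
      fix j :: nat assume "j \<in> UNIV"
      show "(\<lambda>x. x (j + i)) \<in> measurable ?M0 borel"
        by (rule measurable_component_singleton) simp
    qed (simp add: space_M0)
    then show ?thesis using measurable_cong_sets[OF sets_P sets_P] by blast
  qed
  have shs: "B \<in> sets P \<Longrightarrow> shiftn i -` B \<in> sets P" for B i
    using measurable_sets[OF shm, of B i] spP by simp
  have stat1: "B \<in> sets P \<Longrightarrow> measure P (shiftn 1 -` B) = measure P B" for B
    using measure_distr[OF shm, of B 1] stationary spP by simp
  have stat: "B \<in> sets P \<Longrightarrow> measure P (shiftn i -` B) = measure P B" for B i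
  proof (induction i)
    case 0
    have "shiftn 0 = (\<lambda>x::nat \<Rightarrow> 'a. x)" unfolding shiftn_def by auto
    then show ?case by simp
  next
    case (Suc i)
    have "shiftn (Suc i) -` B = shiftn 1 -` (shiftn i -` B)"
    proof -
      have "\<And>x::nat \<Rightarrow> 'a. shiftn i (shiftn 1 x) = shiftn (Suc i) x" using shiftn_shiftn[of i 1] by simp
      then show ?thesis by (auto simp del: One_nat_def)
    qed
    then show ?case using stat1[OF shs[OF Suc.prems]] Suc by simp
  qed
  define T where "T l = transf_event (u n) (A l)" for l
  define J where "J l = block_times (k n) (n div k n) (a l) (b l)" for l
  define U where "U l = (\<lfloor>real (k n) * b l\<rfloor> + 1) * int (n div k n)" for l
  define R where "R l = {i::nat. U l - int (q n) \<le> int i \<and> int i < U l}" for l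
  have Jeq: "J l = {i. (\<lceil>real (k n) * a l\<rceil> - 1) * int (n div k n) \<le> int i \<and> int i < U l}" for l
    unfolding J_def U_def block_times_def by simp
  have gm: "gen_inv (u n) \<in> borel_measurable borel"
    by (rule gen_inv_meas) (rule u_mono)
  have Tm: "T l \<in> sets P" if "l \<in> {1..m}" for l
  proof -
    have "A l \<in> sets ?M0" using cyl_sets A_field that by blast
    then have "(\<lambda>x j. gen_inv (u n) (norm (x j)) *\<^sub>R (x j /\<^sub>R norm (x j))) -` A l \<inter> space ?M0 \<in> sets ?M0"
      using transf_meas[OF gm] measurable_sets by blast
    then show ?thesis unfolding T_def transf_event_def using sets_P by (simp add: vimage_def space_M0)
  qed
  have noc: "B \<in> sets P \<Longrightarrow> no_occ J' B \<in> sets P" for B J'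
  proof -
    assume B: "B \<in> sets P"
    have "no_occ J' B = (\<Inter>i\<in>J'. shiftn i -` (space P - B))" unfolding no_occ_def spP by auto
    also have "\<dots> \<in> sets P" using B shs by (intro sets_INT_UNIV[OF spP]) auto
    finally show ?thesis .
  qed
  have rem: "B \<in> sets P \<Longrightarrow> run_end j B \<in> sets P" for B j
  proof -
    assume B: "B \<in> sets P"
    have "run_end j B = B \<inter> (\<Inter>i\<in>{1..j}. shiftn i -` (space P - B))" unfolding run_end_def spP by auto
    also have "\<dots> \<in> sets P" using B shs by (intro sets.Int sets_INT_UNIV[OF spP]) auto
    finally show ?thesis .
  qed
  define X where "X = (\<Inter>l\<in>{1..m}. no_occ (J l) (run_end (q n) (T l)))"
  define Y where "Y = (\<Inter>l\<in>{1..m}. no_occ (J l) (T l))"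
  have Xm: "X \<in> sets P" unfolding X_def using Tm noc rem by (intro sets_INT_UNIV[OF spP]) auto
  have Ym: "Y \<in> sets P" unfolding Y_def using Tm noc by (intro sets_INT_UNIV[OF spP]) auto
  have YX: "Y \<subseteq> X" unfolding X_def Y_def no_occ_def run_end_def by auto
  have XY: "X - Y \<subseteq> (\<Union>l\<in>{1..m}. \<Union>i\<in>R l. shiftn i -` T l)"
  proof
    fix x assume x: "x \<in> X - Y"
    then obtain l where l: "l \<in> {1..m}" "x \<notin> no_occ (J l) (T l)" unfolding Y_def by auto
    have "x \<in> no_occ (J l) (run_end (q n) (T l))" using x l unfolding X_def by auto
    from core_occ[OF this l(2) Jeq] l show "x \<in> (\<Union>l\<in>{1..m}. \<Union>i\<in>R l. shiftn i -` T l)"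
      unfolding R_def by auto
  qed
  have Rfin: "finite (R l)" and Rcard: "card (R l) \<le> q n" for l
    using card_R[of "U l" "q n"] unfolding R_def by auto
  have "measure P X - measure P Y = measure P (X - Y)"
    using P.finite_measure_Diff[OF Xm Ym YX] by simp
  also have "\<dots> \<le> measure P (\<Union>l\<in>{1..m}. \<Union>i\<in>R l. shiftn i -` T l)"
    using XY Tm shs Rfin by (intro P.finite_measure_mono) auto
  also have "\<dots> \<le> (\<Sum>l=1..m. measure P (\<Union>i\<in>R l. shiftn i -` T l))"
    using Tm shs Rfin by (intro measure_UNION_le) auto
  also have "\<dots> \<le> (\<Sum>l=1..m. \<Sum>i\<in>R l. measure P (shiftn i -` T l))"
    using Tm shs Rfin by (intro sum_mono measure_UNION_le) auto
  also have "\<dots> = (\<Sum>l=1..m. real (card (R l)) * measure P (T l))"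
    using Tm stat by (intro sum.cong) auto
  also have "\<dots> \<le> (\<Sum>l=1..m. real (q n) * measure P (T l))"
    using Rcard by (intro sum_mono mult_right_mono) auto
  also have "\<dots> = real (q n) * (\<Sum>l=1..m. measure P (T l))"
    by (simp add: sum_distrib_left)
  finally have main: "measure P X - measure P Y \<le> real (q n) * (\<Sum>l=1..m. measure P (T l))" .
  have "measure P Y \<le> measure P X" using P.finite_measure_mono[OF YX Xm] .
  then have "\<bar>measure P X - measure P Y\<bar> \<le> real (q n) * (\<Sum>l=1..m. measure P (T l))"
    using main by linarith
  then show ?thesis unfolding X_def Y_def T_def J_def .
qed

end
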